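(* Fix $n\geq1$. Let $\alpha>\beta>0$ and $\delta>0$. Let $\mu$ be a Borel probability measure on $B(0,1)\subset\mathbb R^n$ such that for $j=1,\dots,n$, \[\sup_{a\in\mathbb R}\mu\{x: x^j\in B_{\mathbb R}(a,\delta)\}\leq\delta^{\alpha}.\] Let $K>2$ and let $\nu$ be a Borel probability measure supported in $B(0,K)$ such that \[\int_{B(0,2\delta^{-1})}|\hat\nu(\xi)|\,d\xi\leq\delta^{-\beta}.\] Then there is a constant $c$ depending only on $K$ and $n$ such that for all $\xi\in\mathbb R^n$ with $\|\xi\|\in[\delta^{-1}/2,\delta^{-1}]$, \[\int|\hat\nu(x\xi)|\,d\mu(x)\leq c\,\delta^{\frac{\alpha-\beta}{n+2}}.\]
   Context: $\mathbb R^n$ carries the standard scalar product, Euclidean norm and coordinatewise multiplication ($x\xi=(x^1\xi^1,\dots,x^n\xi^n)$). $\hat\nu(\xi)=\int e^{2i\pi\langle\xi,x\rangle}d\nu(x)$. $B(0,r)$ is the closed Euclidean ball and $B_{\mathbb R}(a,\delta)=[a-\delta,a+\delta]$. *)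

theory Defs
  imports "HOL-Analysis.Analysis" "HOL-Probability.Probability"
begin

definition fourier_meas :: "(real^'n) measure \<Rightarrow> real^'n \<Rightarrow> complex" where
  "fourier_meas nu \<xi> = (\<integral>x. cis (2 * pi * (\<xi> \<bullet> x)) \<partial>nu)"

definition coord_mult :: "real^'n \<Rightarrow> real^'n \<Rightarrow> real^'n" where
  "coord_mult x \<xi> = (\<chi> i. x $ i * \<xi> $ i)"

end

theory Submission imports Defs begin

lemma cis_diff_le: "cmod (cis a - cis b) \<le> \<bar>a - b\<bar>"
proof -
  have e: "cis a - cis b = cis b * (cis (a - b) - 1)"
  proof -
    have "cis b * cis (a - b) = cis a" by (simp add: cis_mult)
    thus ?thesis by (simp add: algebra_simps)
  qed
  define t where "t = a - b"
  have "(cmod (cis t - 1))^2 = (cos t - 1)^2 + (sin t)^2"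
    by (simp add: cmod_def cis.code)
  also have "\<dots> = 4 * (sin (t/2))^2"
    using cos_double_sin[of "t/2"] sin_cos_squared_add[of t] by (simp add: power2_eq_square algebra_simps)
  also have "\<dots> \<le> t^2"
  proof -
    have "\<bar>sin (t/2)\<bar> \<le> \<bar>t/2\<bar>" by (rule abs_sin_x_le_abs_x)
    hence "(sin (t/2))^2 \<le> (t/2)^2" by (metis abs_le_square_iff)
    thus ?thesis by (simp add: power_divide)
  qed
  finally have "(cmod (cis t - 1))^2 \<le> \<bar>t\<bar>^2" by simp
  hence "cmod (cis t - 1) \<le> \<bar>t\<bar>" by (rule power2_le_imp_le) simp
  thus ?thesis unfolding e t_def by (simp add: norm_mult)
qed

lemma fm_integrable:
  fixes \<nu> :: "(real^'n) measure"
  assumes "prob_space \<nu>" "sets \<nu> = sets borel"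
  shows "integrable \<nu> (\<lambda>x. cis (2 * pi * (y \<bullet> x)))"
proof -
  interpret prob_space \<nu> by fact
  have m: "(\<lambda>x. cis (2 * pi * (y \<bullet> x))) \<in> borel_measurable \<nu>"
    unfolding measurable_cong_sets[OF assms(2) refl]
    by (intro borel_measurable_continuous_onI continuous_intros)
  show ?thesis
    by (rule integrable_const_bound[where B=1]) (use m in auto)
qed

lemma fm_lip:
  fixes \<nu> :: "(real^'n) measure"
  assumes "prob_space \<nu>" "sets \<nu> = sets borel" "measure \<nu> (cball 0 K) = 1"
  shows "cmod (fourier_meas \<nu> y - fourier_meas \<nu> y') \<le> 2 * pi * K * norm (y - y')"
proof -
  interpret prob_space \<nu> by fact
  have ev: "cball 0 K \<in> events" using assms(2) by simp
  have ae: "AE x in \<nu>. x \<in> cball 0 K" using AE_prob_1[OF assms(3)] .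
  have i1: "integrable \<nu> (\<lambda>x. cis (2 * pi * (y \<bullet> x)))" by (rule fm_integrable[OF assms(1,2)])
  have i2: "integrable \<nu> (\<lambda>x. cis (2 * pi * (y' \<bullet> x)))" by (rule fm_integrable[OF assms(1,2)])
  have "fourier_meas \<nu> y - fourier_meas \<nu> y' = (\<integral>x. cis (2 * pi * (y \<bullet> x)) - cis (2 * pi * (y' \<bullet> x)) \<partial>\<nu>)"
    unfolding fourier_meas_def using i1 i2 by simp
  also have "cmod \<dots> \<le> (\<integral>x. cmod (cis (2 * pi * (y \<bullet> x)) - cis (2 * pi * (y' \<bullet> x))) \<partial>\<nu>)"
    by (rule integral_norm_bound)
  also have "\<dots> \<le> (\<integral>x. 2 * pi * K * norm (y - y') \<partial>\<nu>)"
  proof (rule integral_mono_AE)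
    show "integrable \<nu> (\<lambda>x. cmod (cis (2 * pi * (y \<bullet> x)) - cis (2 * pi * (y' \<bullet> x))))"
      using i1 i2 by auto
    show "integrable \<nu> (\<lambda>x. 2 * pi * K * norm (y - y'))" by simp
    show "AE x in \<nu>. cmod (cis (2 * pi * (y \<bullet> x)) - cis (2 * pi * (y' \<bullet> x))) \<le> 2 * pi * K * norm (y - y')"
      using ae
    proof eventually_elim
      case (elim x)
      have "cmod (cis (2 * pi * (y \<bullet> x)) - cis (2 * pi * (y' \<bullet> x))) \<le> \<bar>2 * pi * (y \<bullet> x) - 2 * pi * (y' \<bullet> x)\<bar>"
        by (rule cis_diff_le)
      also have "\<dots> = \<bar>2 * pi * ((y - y') \<bullet> x)\<bar>" by (simp add: inner_diff_left algebra_simps)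
      also have "\<dots> = 2 * pi * \<bar>(y - y') \<bullet> x\<bar>" by (simp add: abs_mult)
      also have "\<dots> \<le> 2 * pi * (norm (y - y') * norm x)"
        by (intro mult_left_mono Cauchy_Schwarz_ineq2) auto
      also have "\<dots> \<le> 2 * pi * (norm (y - y') * K)"
        using elim by (intro mult_left_mono) auto
      finally show ?case by (simp add: algebra_simps)
    qed
  qed
  also have "\<dots> = 2 * pi * K * norm (y - y')" by (simp add: prob_space)
  finally show ?thesis .
qed

lemma fm_le1:
  fixes \<nu> :: "(real^'n) measure"
  assumes "prob_space \<nu>" "sets \<nu> = sets borel"
  shows "cmod (fourier_meas \<nu> y) \<le> 1"
proof -
  interpret prob_space \<nu> by fact
  have "cmod (fourier_meas \<nu> y) \<le> (\<integral>x. cmod (cis (2 * pi * (y \<bullet> x))) \<partial>\<nu>)"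
    unfolding fourier_meas_def by (rule integral_norm_bound)
  also have "\<dots> = 1" by (simp add: prob_space)
  finally show ?thesis .
qed

lemma fm_cont:
  fixes \<nu> :: "(real^'n) measure"
  assumes "prob_space \<nu>" "sets \<nu> = sets borel" "measure \<nu> (cball 0 K) = 1" "K \<ge> 0"
  shows "continuous_on S (\<lambda>z. cmod (fourier_meas \<nu> z))"
proof -
  have "(2*pi*K)-lipschitz_on S (\<lambda>z. cmod (fourier_meas \<nu> z))"
  proof (rule lipschitz_onI)
    fix x y assume "x \<in> S" "y \<in> S"
    have "dist (cmod (fourier_meas \<nu> x)) (cmod (fourier_meas \<nu> y)) \<le> cmod (fourier_meas \<nu> x - fourier_meas \<nu> y)"
      by (simp add: dist_real_def norm_triangle_ineq3)
    also have "\<dots> \<le> 2 * pi * K * dist x y" using fm_lip[OF assms(1-3)] by (simp add: dist_norm)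
    finally show "dist (cmod (fourier_meas \<nu> x)) (cmod (fourier_meas \<nu> y)) \<le> 2 * pi * K * dist x y" .
  qed (use assms in simp)
  thus ?thesis by (rule lipschitz_on_continuous_on)
qed

lemma coord_mult_meas[measurable]: "(\<lambda>x. coord_mult x \<xi>) \<in> borel_measurable borel"
  unfolding coord_mult_def
  by (intro borel_measurable_continuous_onI continuous_on_vec_lambda continuous_intros)

lemma norm_coord_mult: "norm x \<le> 1 \<Longrightarrow> norm (coord_mult x \<xi>) \<le> norm \<xi>"
  unfolding coord_mult_def
proof (rule norm_le_componentwise_cart)
  fix i assume "norm x \<le> 1"
  hence "\<bar>x $ i\<bar> \<le> 1" using component_le_norm_cart[of x i] by simp
  thus "norm ((\<chi> i. x $ i * \<xi> $ i) $ i) \<le> norm (\<xi> $ i)"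
    by (simp add: abs_mult mult_left_le_one_le)
qed


lemma cball_borel[measurable]: "cball (y::'a::euclidean_space) r \<in> sets borel" by simp

lemma main:
  fixes \<mu> \<nu> :: "(real^'n) measure" and \<xi> :: "real^'n"
  assumes K: "K > 2" and ab: "\<alpha> > \<beta>" "\<beta> > 0" "\<delta> > 0" "\<delta> < 1"
   and \<mu>: "prob_space \<mu>" "sets \<mu> = sets borel" "measure \<mu> (cball 0 1) = 1"
   and h\<mu>: "\<forall>j a. measure \<mu> {x. x $ j \<in> {a - \<delta> .. a + \<delta>}} \<le> \<delta> powr \<alpha>"
   and \<nu>: "prob_space \<nu>" "sets \<nu> = sets borel" "measure \<nu> (cball 0 K) = 1"
   and h\<nu>: "(\<integral>\<zeta>\<in>cball 0 (2/\<delta>). cmod (fourier_meas \<nu> \<zeta>) \<partial>lborel) \<le> \<delta> powr (-\<beta>)"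
   and h\<xi>: "norm \<xi> \<in> {1/(2*\<delta>) .. 1/\<delta>}"
  shows "(\<integral>x. cmod (fourier_meas \<nu> (coord_mult x \<xi>)) \<partial>\<mu>)
     \<le> ((2 * real CARD('n))^CARD('n) / unit_ball_vol (real CARD('n)) + 2*pi*K)
          * \<delta> powr ((\<alpha> - \<beta>)/(real CARD('n) + 2))"
proof -
  interpret M: prob_space \<mu> by fact
  define N where "N = real CARD('n)"
  have N1: "N \<ge> 1" unfolding N_def by simp
  define \<gamma> where "\<gamma> = (\<alpha> - \<beta>) / (N + 2)"
  have \<gamma>0: "\<gamma> > 0" unfolding \<gamma>_def using ab N1 by simp
  define r where "r = \<delta> powr \<gamma> / (2 * N)"
  have dg: "\<delta> powr \<gamma> \<le> 1" using ab \<gamma>0 by (simp add: powr_le1)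
  have dg0: "\<delta> powr \<gamma> > 0" using ab by simp
  have r0: "r > 0" unfolding r_def using dg0 N1 by simp
  have r1: "r \<le> 1" unfolding r_def using dg N1 by (simp add: field_simps)
  define L where "L = 2 * pi * K"
  define F where "F = (\<lambda>z. cmod (fourier_meas \<nu> z))"
  have F0: "F z \<ge> 0" for z unfolding F_def by simp
  have Flip: "F y \<le> F z + L * dist y z" for y z
  proof -
    have "F y - F z \<le> cmod (fourier_meas \<nu> y - fourier_meas \<nu> z)"
      unfolding F_def by (rule norm_triangle_ineq2)
    also have "\<dots> \<le> L * dist y z" unfolding L_def dist_norm by (rule fm_lip[OF \<nu>])
    finally show ?thesis by simp
  qed
  have Fcont: "continuous_on S F" for S unfolding F_def by (rule fm_cont[OF \<nu>]) (use K in simp)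
  have Fmeas[measurable]: "F \<in> borel_measurable borel" by (rule borel_measurable_continuous_onI[OF Fcont])
  define \<omega> where "\<omega> = unit_ball_vol N"
  have \<omega>0: "\<omega> > 0" unfolding \<omega>_def using N1 by simp
  define V where "V = \<omega> * r ^ CARD('n)"
  have V0: "V > 0" unfolding V_def using \<omega>0 r0 by simp
  have volB: "emeasure lborel (cball y r) = ennreal V" for y :: "real^'n"
    unfolding V_def \<omega>_def N_def using emeasure_cball[of r y] r0 by simp
  have avg: "ennreal (F y) \<le> ennreal (1/V) * (\<integral>\<^sup>+z. indicator (cball y r) z * ennreal (F z) \<partial>lborel) + ennreal (L * r)"
    for y
  proof -
    have "ennreal (V * F y) = (\<integral>\<^sup>+z. ennreal (F y) * indicator (cball y r) z \<partial>lborel)"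
      using V0 F0 by (simp add: nn_integral_cmult_indicator volB ennreal_mult mult.commute)
    also have "\<dots> \<le> (\<integral>\<^sup>+z. (indicator (cball y r) z * ennreal (F z) + ennreal (L * r) * indicator (cball y r) z) \<partial>lborel)"
    proof (rule nn_integral_mono)
      fix z
      show "ennreal (F y) * indicator (cball y r) z \<le> indicator (cball y r) z * ennreal (F z) + ennreal (L * r) * indicator (cball y r) z"
      proof (cases "z \<in> cball y r")
        case True
        have "F y \<le> F z + L * r"
          using Flip[of y z] True K unfolding L_def
          by (smt (verit, best) mem_cball mult_left_mono pi_gt_zero mult_pos_pos)
        hence "ennreal (F y) \<le> ennreal (F z) + ennreal (L * r)"
          using F0 r0 K unfolding L_def by (simp add: ennreal_plus[symmetric] del: ennreal_plus)
        thus ?thesis using True by simp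
      qed simp
    qed
    also have "\<dots> = (\<integral>\<^sup>+z. indicator (cball y r) z * ennreal (F z) \<partial>lborel) + ennreal (L * r) * ennreal V"
    proof -
      have m1: "(\<lambda>z. indicator (cball y r) z * ennreal (F z)) \<in> borel_measurable lborel" by simp
      have m2: "(\<lambda>z. ennreal (L * r) * indicator (cball y r) z) \<in> borel_measurable lborel" by simp
      show ?thesis by (simp add: nn_integral_add[OF m1 m2] nn_integral_cmult_indicator volB)
    qed
    finally have 1: "ennreal (V * F y) \<le> (\<integral>\<^sup>+z. indicator (cball y r) z * ennreal (F z) \<partial>lborel) + ennreal (L * r) * ennreal V" .
    have "ennreal (F y) = ennreal (1/V) * ennreal (V * F y)"
      using V0 F0 by (simp add: ennreal_mult[symmetric])
    also have "\<dots> \<le> ennreal (1/V) * ((\<integral>\<^sup>+z. indicator (cball y r) z * ennreal (F z) \<partial>lborel) + ennreal (L * r) * ennreal V)"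
      by (rule mult_left_mono[OF 1]) simp
    also have "\<dots> = ennreal (1/V) * (\<integral>\<^sup>+z. indicator (cball y r) z * ennreal (F z) \<partial>lborel) + ennreal (L * r)"
    proof -
      have "ennreal (1/V) * (ennreal (L * r) * ennreal V) = ennreal (L * r)"
        using V0 r0 K unfolding L_def by (simp add: ennreal_mult[symmetric])
      thus ?thesis by (simp add: distrib_left)
    qed
    finally show ?thesis .
  qed
  obtain j where j: "\<And>i. \<bar>\<xi> $ i\<bar> \<le> \<bar>\<xi> $ j\<bar>"
  proof -
    define S where "S = (\<lambda>i. \<bar>\<xi> $ i\<bar>) ` UNIV"
    have fS: "finite S" "S \<noteq> {}" unfolding S_def by auto
    obtain j where jj: "Max S = \<bar>\<xi> $ j\<bar>" using Max_in[OF fS] S_def by (metis imageE)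
    have "\<forall>i. \<bar>\<xi> $ i\<bar> \<le> \<bar>\<xi> $ j\<bar>"
      using Max_ge[OF fS(1)] unfolding jj[symmetric] S_def by auto
    thus ?thesis using that by blast
  qed
  have "norm \<xi> \<le> (\<Sum>i\<in>UNIV. \<bar>\<xi> $ i\<bar>)" by (rule norm_le_l1_cart)
  also have "\<dots> \<le> (\<Sum>i\<in>(UNIV::'n set). \<bar>\<xi> $ j\<bar>)" by (rule sum_mono) (rule j)
  also have "\<dots> = N * \<bar>\<xi> $ j\<bar>" unfolding N_def by simp
  finally have xjN: "norm \<xi> \<le> N * \<bar>\<xi> $ j\<bar>" .
  have h1: "1/(2*\<delta>) \<le> norm \<xi>" using h\<xi> by simp
  have xj: "1/(2*\<delta>) \<le> N * \<bar>\<xi> $ j\<bar>" using h1 xjN by (rule order_trans)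
  have xj0: "\<bar>\<xi> $ j\<bar> > 0"
  proof (rule ccontr)
    assume "\<not> \<bar>\<xi> $ j\<bar> > 0"
    hence "\<bar>\<xi> $ j\<bar> = 0" by simp
    with xj ab show False by simp
  qed
  have rx: "r / \<bar>\<xi> $ j\<bar> \<le> \<delta>"
  proof -
    have "r / \<bar>\<xi> $ j\<bar> = \<delta> powr \<gamma> / (2 * (N * \<bar>\<xi> $ j\<bar>))" unfolding r_def by (simp add: field_simps)
    also have "\<dots> \<le> \<delta> powr \<gamma> / (2 * (1/(2*\<delta>)))"
      using xj ab dg0 xj0 N1 by (intro divide_left_mono) auto
    also have "\<dots> = \<delta> powr \<gamma> * \<delta>" using ab by simp
    also have "\<dots> \<le> \<delta>" using dg ab by simp
    finally show ?thesis .
  qed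
  define g where "g = (\<lambda>x z. if norm x \<le> 1 \<and> dist (coord_mult x \<xi>) z \<le> r then ennreal (F z) else 0)"
  have "(\<lambda>(x, z). g x z) \<in> borel_measurable (borel \<Otimes>\<^sub>M borel)"
    unfolding g_def by measurable
  moreover have "sets (\<mu> \<Otimes>\<^sub>M lborel) = sets (borel \<Otimes>\<^sub>M borel)"
    by (rule sets_pair_measure_cong) (simp_all add: \<mu>)
  ultimately have gmeas: "(\<lambda>(x, z). g x z) \<in> borel_measurable (\<mu> \<Otimes>\<^sub>M lborel)"
    using measurable_cong_sets by blast
  interpret P: pair_sigma_finite \<mu> "lborel :: (real^'n) measure"
    by (intro pair_sigma_finite.intro prob_space_imp_sigma_finite \<mu>(1) sigma_finite_lborel)
  have Gmeas: "(\<lambda>x. \<integral>\<^sup>+z. g x z \<partial>lborel) \<in> borel_measurable \<mu>"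
    by (rule lborel.borel_measurable_nn_integral[OF gmeas])
  have fub: "(\<integral>\<^sup>+x. (\<integral>\<^sup>+z. g x z \<partial>lborel) \<partial>\<mu>) = (\<integral>\<^sup>+z. (\<integral>\<^sup>+x. g x z \<partial>\<mu>) \<partial>lborel)"
    using P.Fubini'[OF gmeas] by simp
  have ae1: "AE x in \<mu>. x \<in> cball 0 1" by (rule M.AE_prob_1[OF \<mu>(3)])
  have s1: "(\<integral>\<^sup>+x. ennreal (F (coord_mult x \<xi>)) \<partial>\<mu>)
      \<le> (\<integral>\<^sup>+x. ennreal (1/V) * (\<integral>\<^sup>+z. g x z \<partial>lborel) + ennreal (L * r) \<partial>\<mu>)"
  proof (rule nn_integral_mono_AE)
    show "AE x in \<mu>. ennreal (F (coord_mult x \<xi>)) \<le> ennreal (1/V) * (\<integral>\<^sup>+z. g x z \<partial>lborel) + ennreal (L * r)"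
      using ae1
    proof eventually_elim
      case (elim x)
      have "(\<integral>\<^sup>+z. indicator (cball (coord_mult x \<xi>) r) z * ennreal (F z) \<partial>lborel) = (\<integral>\<^sup>+z. g x z \<partial>lborel)"
        using elim by (intro nn_integral_cong) (simp add: g_def split: split_indicator)
      thus ?case using avg[of "coord_mult x \<xi>"] by simp
    qed
  qed
  also have "\<dots> = ennreal (1/V) * (\<integral>\<^sup>+x. (\<integral>\<^sup>+z. g x z \<partial>lborel) \<partial>\<mu>) + ennreal (L * r)"
    using Gmeas by (subst nn_integral_add) (auto simp: nn_integral_cmult M.emeasure_space_1)
  finally have s2: "(\<integral>\<^sup>+x. ennreal (F (coord_mult x \<xi>)) \<partial>\<mu>)
      \<le> ennreal (1/V) * (\<integral>\<^sup>+x. (\<integral>\<^sup>+z. g x z \<partial>lborel) \<partial>\<mu>) + ennreal (L * r)" .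
  have "(\<integral>\<^sup>+x. (\<integral>\<^sup>+z. g x z \<partial>lborel) \<partial>\<mu>) \<le> (\<integral>\<^sup>+z. ennreal (\<delta> powr \<alpha>) * (indicator (cball 0 (2/\<delta>)) z * ennreal (F z)) \<partial>lborel)"
    unfolding fub
  proof (rule nn_integral_mono)
    fix z :: "real^'n"
    show "(\<integral>\<^sup>+x. g x z \<partial>\<mu>) \<le> ennreal (\<delta> powr \<alpha>) * (indicator (cball 0 (2/\<delta>)) z * ennreal (F z))"
    proof (cases "z \<in> cball 0 (2/\<delta>)")
      case False
      have "g x z = 0" for x
      proof (rule ccontr)
        assume "g x z \<noteq> 0"
        hence x1: "norm x \<le> 1" and d: "dist (coord_mult x \<xi>) z \<le> r" unfolding g_def by (auto split: if_splits)
        have "norm z \<le> norm (coord_mult x \<xi>) + dist (coord_mult x \<xi>) z"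
          by (metis dist_commute dist_norm norm_triangle_sub add.commute norm_minus_commute order_refl
              norm_triangle_ineq4 diff_add_cancel norm_triangle_ineq)
        also have "\<dots> \<le> 1/\<delta> + 1" using norm_coord_mult[OF x1, of \<xi>] h\<xi> d r1 by simp
        also have "\<dots> \<le> 2/\<delta>" using ab by (simp add: field_simps)
        finally show False using False by simp
      qed
      thus ?thesis by simp
    next
      case True
      define a where "a = z $ j / \<xi> $ j"
      define T where "T = {x::real^'n. x $ j \<in> {a - \<delta> .. a + \<delta>}}"
      have Tm: "T \<in> sets \<mu>" unfolding T_def \<mu>(2) by measurable
      have "g x z \<le> ennreal (F z) * indicator T x" for x
      proof (cases "norm x \<le> 1 \<and> dist (coord_mult x \<xi>) z \<le> r")
        case True
        hence "\<bar>x $ j * \<xi> $ j - z $ j\<bar> \<le> r"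
          using component_le_norm_cart[of "coord_mult x \<xi> - z" j] by (simp add: dist_norm coord_mult_def)
        moreover have "(x $ j - a) * \<xi> $ j = x $ j * \<xi> $ j - z $ j"
          unfolding a_def using xj0 by (simp add: field_simps)
        ultimately have "\<bar>x $ j - a\<bar> * \<bar>\<xi> $ j\<bar> \<le> r"
          by (metis abs_mult)
        hence "\<bar>x $ j - a\<bar> \<le> r / \<bar>\<xi> $ j\<bar>" using xj0 by (simp add: field_simps)
        hence "x \<in> T" using rx unfolding T_def by auto
        thus ?thesis using True by (simp add: g_def)
      qed (auto simp: g_def)
      hence "(\<integral>\<^sup>+x. g x z \<partial>\<mu>) \<le> (\<integral>\<^sup>+x. ennreal (F z) * indicator T x \<partial>\<mu>)"
        by (intro nn_integral_mono) auto
      also have "\<dots> = ennreal (F z) * emeasure \<mu> T" using Tm by (simp add: nn_integral_cmult_indicator)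
      also have "\<dots> \<le> ennreal (F z) * ennreal (\<delta> powr \<alpha>)"
      proof (rule mult_left_mono)
        show "emeasure \<mu> T \<le> ennreal (\<delta> powr \<alpha>)"
          using h\<mu> unfolding T_def M.emeasure_eq_measure by simp
      qed simp
      finally show ?thesis using True by (simp add: mult.commute)
    qed
  qed
  also have "\<dots> = ennreal (\<delta> powr \<alpha>) * (\<integral>\<^sup>+z. indicator (cball 0 (2/\<delta>)) z * ennreal (F z) \<partial>lborel)"
    by (rule nn_integral_cmult) measurable
  also have "(\<integral>\<^sup>+z. indicator (cball 0 (2/\<delta>)) z * ennreal (F z) \<partial>lborel) = ennreal (\<integral>\<zeta>\<in>cball 0 (2/\<delta>). F \<zeta> \<partial>lborel)"
  proof -
    have "(\<integral>\<^sup>+z. indicator (cball 0 (2/\<delta>)) z * ennreal (F z) \<partial>lborel) = (\<integral>\<^sup>+z. ennreal (indicator (cball 0 (2/\<delta>)) z *\<^sub>R F z) \<partial>lborel)"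
      by (intro nn_integral_cong) (simp split: split_indicator)
    also have "\<dots> = ennreal (\<integral>\<zeta>\<in>cball 0 (2/\<delta>). F \<zeta> \<partial>lborel)"
      unfolding set_lebesgue_integral_def
    proof (rule nn_integral_eq_integral)
      show "integrable lborel (\<lambda>x. indicator (cball 0 (2/\<delta>)) x *\<^sub>R F x)"
        by (rule borel_integrable_compact) (auto intro: Fcont)
    qed (simp add: F0)
    finally show ?thesis .
  qed
  also have "ennreal (\<delta> powr \<alpha>) * ennreal (\<integral>\<zeta>\<in>cball 0 (2/\<delta>). F \<zeta> \<partial>lborel) \<le> ennreal (\<delta> powr \<alpha> * \<delta> powr (-\<beta>))"
    unfolding F_def ennreal_mult'[symmetric, OF powr_ge_zero]
    by (intro ennreal_leI mult_left_mono h\<nu>) simp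
  finally have X: "(\<integral>\<^sup>+x. (\<integral>\<^sup>+z. g x z \<partial>lborel) \<partial>\<mu>) \<le> ennreal (\<delta> powr \<alpha> * \<delta> powr (-\<beta>))" .
  define E where "E = \<delta> powr \<alpha> * \<delta> powr (-\<beta>)"
  have E0: "E \<ge> 0" unfolding E_def by simp
  have "(\<integral>\<^sup>+x. ennreal (F (coord_mult x \<xi>)) \<partial>\<mu>) \<le> ennreal (1/V) * ennreal E + ennreal (L * r)"
    using X unfolding E_def by (intro order_trans[OF s2] add_right_mono mult_left_mono) auto
  also have "\<dots> = ennreal (E / V + L * r)"
    using V0 E0 r0 K unfolding L_def by (simp add: ennreal_mult[symmetric] ennreal_plus[symmetric] del: ennreal_plus)
  finally have I: "(\<integral>x. F (coord_mult x \<xi>) \<partial>\<mu>) \<le> E / V + L * r"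
    by (intro integral_real_bounded) (use V0 E0 r0 K in \<open>auto simp: L_def\<close>)
  have NN0: "(N + 2) * \<gamma> = \<alpha> - \<beta>" unfolding \<gamma>_def using N1 by simp
  have NN: "N * \<gamma> + 2 * \<gamma> = \<alpha> - \<beta>" using NN0 by (simp add: algebra_simps)
  have Epow: "E = \<delta> powr (\<alpha> - \<beta>)" unfolding E_def using ab by (simp add: powr_add[symmetric])
  have rn: "r ^ CARD('n) = \<delta> powr (\<gamma> * N) / (2 * N) ^ CARD('n)"
    unfolding r_def N_def using ab by (simp add: power_divide powr_realpow[symmetric] powr_powr)
  have ED: "\<delta> powr (\<alpha> - \<beta>) / \<delta> powr (\<gamma> * N) = \<delta> powr (2 * \<gamma>)"
  proof -
    have "\<alpha> - \<beta> - \<gamma> * N = 2 * \<gamma>" using NN by (simp add: algebra_simps)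
    thus ?thesis using ab by (simp add: powr_diff[symmetric])
  qed
  have "E / V = (2 * N) ^ CARD('n) / \<omega> * (\<delta> powr (\<alpha> - \<beta>) / \<delta> powr (\<gamma> * N))"
    unfolding V_def rn Epow using \<omega>0 N1 ab by (simp add: field_simps)
  hence EV0: "E / V = (2 * N) ^ CARD('n) / \<omega> * \<delta> powr (2 * \<gamma>)" unfolding ED .
  have "\<delta> powr (2 * \<gamma>) \<le> \<delta> powr \<gamma>" using ab \<gamma>0 by (intro powr_mono') auto
  hence EV: "E / V \<le> (2 * N) ^ CARD('n) / \<omega> * \<delta> powr \<gamma>"
    unfolding EV0 using \<omega>0 N1 by (intro mult_left_mono) auto
  have Lr: "L * r \<le> L * \<delta> powr \<gamma>"
    unfolding r_def L_def using K N1 dg0 by (simp add: field_simps)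
  have "(\<integral>x. F (coord_mult x \<xi>) \<partial>\<mu>) \<le> ((2 * N) ^ CARD('n) / \<omega> + L) * \<delta> powr \<gamma>"
    using I EV Lr by (simp add: distrib_right)
  thus ?thesis unfolding F_def N_def \<omega>_def L_def \<gamma>_def .
qed

theorem lemma3p16:
  fixes K :: real
  assumes "K > 2"
  shows "\<exists>c::real. \<forall>(\<alpha>::real) (\<beta>::real) (\<delta>::real) (\<mu>::(real^'n) measure) (\<nu>::(real^'n) measure) (\<xi>::real^'n).
     (\<alpha> > \<beta> \<and> \<beta> > 0 \<and> \<delta> > 0
      \<and> prob_space \<mu> \<and> sets \<mu> = sets borel \<and> measure \<mu> (cball 0 1) = 1
      \<and> (\<forall>j. \<forall>a. measure \<mu> {x. x $ j \<in> {a - \<delta> .. a + \<delta>}} \<le> \<delta> powr \<alpha>)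
      \<and> prob_space \<nu> \<and> sets \<nu> = sets borel \<and> measure \<nu> (cball 0 K) = 1
      \<and> (\<integral>\<zeta>\<in>cball 0 (2 / \<delta>). cmod (fourier_meas \<nu> \<zeta>) \<partial>lborel) \<le> \<delta> powr (-\<beta>)
      \<and> norm \<xi> \<in> {1 / (2 * \<delta>) .. 1 / \<delta>})
     \<longrightarrow> (\<integral>x. cmod (fourier_meas \<nu> (coord_mult x \<xi>)) \<partial>\<mu>)
           \<le> c * \<delta> powr ((\<alpha> - \<beta>) / (real CARD('n) + 2))"
proof -
  define C where "C = (2 * real CARD('n))^CARD('n) / unit_ball_vol (real CARD('n)) + 2*pi*K + 1"
  have C1: "C \<ge> 1" unfolding C_def using assms by (simp add: pi_gt_zero)
  show ?thesis
  proof (rule exI[of _ C], intro allI impI)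
    fix \<alpha> \<beta> \<delta> :: real and \<mu> \<nu> :: "(real^'n) measure" and \<xi> :: "real^'n"
    assume H: "\<alpha> > \<beta> \<and> \<beta> > 0 \<and> \<delta> > 0
      \<and> prob_space \<mu> \<and> sets \<mu> = sets borel \<and> measure \<mu> (cball 0 1) = 1
      \<and> (\<forall>j. \<forall>a. measure \<mu> {x. x $ j \<in> {a - \<delta> .. a + \<delta>}} \<le> \<delta> powr \<alpha>)
      \<and> prob_space \<nu> \<and> sets \<nu> = sets borel \<and> measure \<nu> (cball 0 K) = 1
      \<and> (\<integral>\<zeta>\<in>cball 0 (2 / \<delta>). cmod (fourier_meas \<nu> \<zeta>) \<partial>lborel) \<le> \<delta> powr (-\<beta>)
      \<and> norm \<xi> \<in> {1 / (2 * \<delta>) .. 1 / \<delta>}"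
    define \<gamma> where "\<gamma> = (\<alpha> - \<beta>) / (real CARD('n) + 2)"
    have \<gamma>0: "\<gamma> > 0" unfolding \<gamma>_def using H by simp
    show "(\<integral>x. cmod (fourier_meas \<nu> (coord_mult x \<xi>)) \<partial>\<mu>) \<le> C * \<delta> powr ((\<alpha> - \<beta>) / (real CARD('n) + 2))"
    proof (cases "\<delta> < 1")
      case True
      have "(\<integral>x. cmod (fourier_meas \<nu> (coord_mult x \<xi>)) \<partial>\<mu>)
         \<le> ((2 * real CARD('n))^CARD('n) / unit_ball_vol (real CARD('n)) + 2*pi*K) * \<delta> powr \<gamma>"
        unfolding \<gamma>_def
        by (rule main[of K \<beta> \<alpha> \<delta> \<mu> \<nu> \<xi>]) (use H True assms in auto)
      also have "\<dots> \<le> C * \<delta> powr \<gamma>" unfolding C_def by (intro mult_right_mono) auto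
      finally show ?thesis unfolding \<gamma>_def .
    next
      case False
      interpret M: prob_space \<mu> using H by simp
      have "(\<integral>x. cmod (fourier_meas \<nu> (coord_mult x \<xi>)) \<partial>\<mu>) \<le> 1"
      proof (rule integral_real_bounded)
        have "(\<integral>\<^sup>+x. ennreal (cmod (fourier_meas \<nu> (coord_mult x \<xi>))) \<partial>\<mu>) \<le> (\<integral>\<^sup>+x. 1 \<partial>\<mu>)"
          using fm_le1[of \<nu>] H by (intro nn_integral_mono) auto
        thus "(\<integral>\<^sup>+x. ennreal (cmod (fourier_meas \<nu> (coord_mult x \<xi>))) \<partial>\<mu>) \<le> ennreal 1"
          by (simp add: M.emeasure_space_1)
      qed simp
      also have "1 \<le> C * \<delta> powr \<gamma>"
      proof -
        have "1 \<le> \<delta> powr \<gamma>" using False \<gamma>0 by (simp add: ge_one_powr_ge_zero)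
        thus ?thesis using C1 by (metis mult_mono' mult_1 zero_le_one order_trans)
      qed
      finally show ?thesis unfolding \<gamma>_def .
    qed
  qed
qed

end
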